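(* Let $f_{1,\infty}=\{f_n\}_{n=1}^\infty$ be a periodic sequence of continuous maps $f_n:[0,1]\to[0,1]$ (i.e. there is $k\in\mathbb{N}$ with $f_{j+kl}=f_j$ for all $l\in\mathbb{N}$, $1\le j\le k$). Then the following are equivalent for the non-autonomous system $([0,1],f_{1,\infty})$: (1) it is strongly multi-sensitive; (2) it is $\mathcal{N}$-sensitive; (3) it is multi-sensitive; (4) it is sensitive.
   Context: Use the usual metric on $[0,1]$. Write $f_i^n=f_{n+i-1}\circ\cdots\circ f_i$, $f_i^0=\mathrm{id}$, and $f_{1,\infty}^{[k]}=\{f^k_{k(n-1)+1}\}_{n=1}^\infty$ (its $n$-fold composition from index $1$ is $f_1^{kn}$). For $V\subseteq X$, $\delta>0$: $N_{f_{1,\infty}}(V,\delta)=\{n\in\mathbb{N}:\exists u,v\in V,\ d(f_1^n(u),f_1^n(v))>\delta\}$. The system is sensitive if there is $\delta>0$ with $N_{f_{1,\infty}}(V,\delta)\ne\varnothing$ for every nonempty open $V$; multi-sensitive if there is $\delta>0$ with $\bigcap_{i=1}^m N_{f_{1,\infty}}(V_i,\delta)\neq\varnothing$ for every finite collection of nonempty open $V_1,\dots,V_m$. For $\mathbf{v}=(v_1,\dots,v_r)\in\mathbb{N}^r$, it is multi-sensitive with respect to $\mathbf{v}$ if there is $\delta>0$ such that $\bigcap_{i=1}^r N_{f_{1,\infty}^{[v_i]}}(U_i,\delta)\ne\varnothing$ for all nonempty open $U_1,\dots,U_r$; $\mathcal{N}$-sensitive if multi-sensitive with respect to $(1,\dots,n)$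 for every $n$; strongly multi-sensitive if multi-sensitive with respect to every vector in $\mathbb{N}^r$ for every $r$. *)

theory Defs
  imports "HOL-Analysis.Analysis"
begin

text \<open>A non-autonomous system on [0,1] is a sequence f :: nat => real => real,
  indexed from 1 (the value f 0 is irrelevant).\<close>

fun ncomp :: "(nat \<Rightarrow> real \<Rightarrow> real) \<Rightarrow> nat \<Rightarrow> nat \<Rightarrow> real \<Rightarrow> real" where
  "ncomp f i 0 = id"
| "ncomp f i (Suc n) = f (i + n) \<circ> ncomp f i n"

definition block :: "(nat \<Rightarrow> real \<Rightarrow> real) \<Rightarrow> nat \<Rightarrow> nat \<Rightarrow> real \<Rightarrow> real" where
  "block f k = (\<lambda>n. ncomp f (k * (n - 1) + 1) k)"

definition Nset :: "(nat \<Rightarrow> real \<Rightarrow> real) \<Rightarrow> real set \<Rightarrow> real \<Rightarrow> nat set" where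
  "Nset f V \<delta> = {n. n \<ge> 1 \<and> (\<exists>u\<in>V. \<exists>v\<in>V. dist (ncomp f 1 n u) (ncomp f 1 n v) > \<delta>)}"

definition nopen01 :: "real set \<Rightarrow> bool" where
  "nopen01 V \<longleftrightarrow> openin (top_of_set {0..1}) V \<and> V \<noteq> {}"

definition sensitive :: "(nat \<Rightarrow> real \<Rightarrow> real) \<Rightarrow> bool" where
  "sensitive f \<longleftrightarrow> (\<exists>\<delta>>0. \<forall>V. nopen01 V \<longrightarrow> Nset f V \<delta> \<noteq> {})"

definition multi_sensitive :: "(nat \<Rightarrow> real \<Rightarrow> real) \<Rightarrow> bool" where
  "multi_sensitive f \<longleftrightarrow> (\<exists>\<delta>>0. \<forall>(m::nat) (V::nat \<Rightarrow> real set). m \<ge> 1 \<longrightarrow> (\<forall>i<m. nopen01 (V i)) \<longrightarrow>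
      (\<Inter>i<m. Nset f (V i) \<delta>) \<noteq> {})"

definition multi_sensitive_wrt :: "(nat \<Rightarrow> real \<Rightarrow> real) \<Rightarrow> nat \<Rightarrow> (nat \<Rightarrow> nat) \<Rightarrow> bool" where
  "multi_sensitive_wrt f r v \<longleftrightarrow> (\<exists>\<delta>>0. \<forall>U::nat \<Rightarrow> real set. (\<forall>i<r. nopen01 (U i)) \<longrightarrow>
      (\<Inter>i<r. Nset (block f (v i)) (U i) \<delta>) \<noteq> {})"

definition N_sensitive :: "(nat \<Rightarrow> real \<Rightarrow> real) \<Rightarrow> bool" where
  "N_sensitive f \<longleftrightarrow> (\<forall>n\<ge>1. multi_sensitive_wrt f n (\<lambda>i. i + 1))"

definition strongly_multi_sensitive :: "(nat \<Rightarrow> real \<Rightarrow> real) \<Rightarrow> bool" where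
  "strongly_multi_sensitive f \<longleftrightarrow>
     (\<forall>r\<ge>1. \<forall>v. (\<forall>i<r. v i \<ge> 1) \<longrightarrow> multi_sensitive_wrt f r v)"

end

theory Submission
  imports Defs
begin

lemma ncomp_add: "ncomp f i (a + b) = ncomp f (i + a) b \<circ> ncomp f i a"
  by (induction b) (auto simp: add.assoc)

lemma ncomp_block: "ncomp (block f c) 1 n = ncomp f 1 (c * n)"
proof (induction n)
  case 0 then show ?case by simp
next
  case (Suc n)
  have "ncomp (block f c) 1 (Suc n) = block f c (1 + n) \<circ> ncomp (block f c) 1 n" by simp
  also have "\<dots> = ncomp f (1 + c * n) c \<circ> ncomp f 1 (c * n)"
    using Suc by (simp add: block_def)
  also have "\<dots> = ncomp f 1 (c * n + c)" by (simp add: ncomp_add)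
  finally show ?case by (simp add: algebra_simps)
qed

lemma finite_min:
  assumes "finite A" "\<forall>a\<in>A. \<exists>e>0. P a e"
    and mono: "\<And>a e e'. P a e \<Longrightarrow> 0 < e' \<Longrightarrow> e' \<le> e \<Longrightarrow> P a e'"
  shows "\<exists>e>(0::real). \<forall>a\<in>A. P a e"
  using assms(1,2)
proof (induction A rule: finite_induct)
  case empty then show ?case by (auto intro: exI[of _ 1])
next
  case (insert x F)
  then obtain e1 where e1: "e1 > 0" "\<forall>a\<in>F. P a e1" by auto
  from insert obtain e2 where e2: "e2 > 0" "P x e2" by auto
  show ?case
    by (rule exI[of _ "min e1 e2"]) (use e1 e2 mono in auto)
qed

lemma finite_bound:
  assumes "finite A" "\<forall>a\<in>A. \<exists>q::nat. P a q"
  shows "\<exists>M. \<forall>a\<in>A. \<exists>q\<le>M. P a q"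
  using assms
proof (induction A rule: finite_induct)
  case empty then show ?case by auto
next
  case (insert x F)
  then obtain M where M: "\<forall>a\<in>F. \<exists>q\<le>M. P a q" by auto
  from insert obtain q where q: "P x q" by auto
  show ?case
  proof (rule exI[of _ "max M q"], intro ballI)
    fix a assume "a \<in> insert x F"
    then show "\<exists>q'\<le>max M q. P a q'"
    proof
      assume "a = x" then show ?thesis using q by (intro exI[of _ q]) auto
    next
      assume "a \<in> F" then obtain q' where "q' \<le> M" "P a q'" using M by auto
      then show ?thesis by (intro exI[of _ q']) auto
    qed
  qed
qed

locale ps =
  fixes f :: "nat \<Rightarrow> real \<Rightarrow> real" and k :: nat and \<delta> :: real
  assumes cont: "\<And>n. n \<ge> 1 \<Longrightarrow> continuous_on {0..1} (f n)"
    and maps: "\<And>n. n \<ge> 1 \<Longrightarrow> f n ` {0..1} \<subseteq> {0..1}"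
    and kpos: "k \<ge> 1"
    and per: "\<forall>l j. 1 \<le> j \<and> j \<le> k \<longrightarrow> f (j + k * l) = f j"
    and dpos: "\<delta> > 0"
    and sens: "\<And>V. nopen01 V \<Longrightarrow> Nset f V \<delta> \<noteq> {}"
begin

lemma g_maps: "i \<ge> 1 \<Longrightarrow> x \<in> {0..1} \<Longrightarrow> ncomp f i n x \<in> {0..1}"
proof (induction n)
  case 0 then show ?case by simp
next
  case (Suc n)
  then have "ncomp f i n x \<in> {0..1}" by blast
  moreover have "i + n \<ge> 1" using Suc by simp
  ultimately show ?case using maps[of "i+n"] by (simp add: image_subset_iff)
qed

lemma g_cont: "i \<ge> 1 \<Longrightarrow> continuous_on {0..1} (ncomp f i n)"
proof (induction n)
  case 0 then show ?case by (simp add: continuous_on_id)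
next
  case (Suc n)
  have im: "ncomp f i n ` {0..1} \<subseteq> {0..1}" using g_maps Suc.prems by blast
  have "continuous_on (ncomp f i n ` {0..1}) (f (i + n))"
    using continuous_on_subset[OF cont im] Suc.prems by simp
  then show ?case using continuous_on_compose[OF Suc.IH[OF Suc.prems]] by simp
qed

lemma per_ext: assumes "j \<ge> 1" shows "f (j + k * l) = f j"
proof -
  define j' where "j' = (j - 1) mod k + 1"
  define l' where "l' = (j - 1) div k"
  have jj: "j = j' + k * l'" using assms unfolding j'_def l'_def
    by (metis Suc_eq_plus1 add.commute add.left_commute le_add_diff_inverse mod_mult_div_eq plus_1_eq_Suc)
  have j1: "1 \<le> j'" "j' \<le> k" using kpos unfolding j'_def
    by (auto simp: Suc_le_eq)
  have "f (j + k * l) = f (j' + k * (l' + l))" using jj by (simp add: algebra_simps)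
  also have "\<dots> = f j'" using per j1 by blast
  also have "\<dots> = f j" using per j1 jj by metis
  finally show ?thesis .
qed

lemma ncomp_per: "ncomp f (k * q + 1) m = ncomp f 1 m"
proof (induction m)
  case 0 then show ?case by simp
next
  case (Suc m)
  have "f (k * q + 1 + m) = f (1 + m)" using per_ext[of "1+m" q] by (simp add: algebra_simps)
  then show ?case using Suc by simp
qed

lemma g_split: "ncomp f 1 (k * q + m) = ncomp f 1 m \<circ> ncomp f 1 (k * q)"
  using ncomp_add[of f 1 "k*q" m] ncomp_per[of q m] by (simp add: add.commute)

end

lemma grid:
  fixes h :: "real \<Rightarrow> real" and e a b :: real
  assumes e: "0 < e" and ab: "a \<le> b" "{a..b} \<subseteq> {0..1}" and big: "\<bar>h a - h b\<bar> \<ge> 4 * e"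
    and hc: "continuous_on {0..1} h" and hm: "h ` {0..1} \<subseteq> {0..1}"
  shows "\<exists>j::nat. (real j + 1) * e \<le> 1 \<and> {real j * e..(real j + 1) * e} \<subseteq> h ` {a..b}"
proof -
  define lo where "lo = min (h a) (h b)"
  define hi where "hi = max (h a) (h b)"
  have aI: "a \<in> {0..1}" "b \<in> {0..1}" using ab by auto
  have "h a \<in> {0..1}" "h b \<in> {0..1}" using hm aI by (auto simp del: atLeastAtMost_iff)
  then have lo0: "lo \<ge> 0" "hi \<le> 1" unfolding lo_def hi_def by auto
  have hl: "hi - lo \<ge> 4 * e" using big unfolding lo_def hi_def by auto
  define j where "j = nat \<lceil>lo / e\<rceil>"
  have "lo / e \<ge> 0" using lo0 e by simp
  then have c0: "\<lceil>lo / e\<rceil> \<ge> 0" by simp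
  have rj: "real j = of_int \<lceil>lo / e\<rceil>" unfolding j_def using c0 by simp
  have j1: "real j \<ge> lo / e" "real j < lo / e + 1" unfolding rj by linarith+
  have j2: "real j * e \<ge> lo" using j1(1) e by (simp add: field_simps)
  have j3: "real j * e < lo + e" using j1(2) e by (simp add: field_simps)
  have hc': "continuous_on {a..b} h" using continuous_on_subset[OF hc ab(2)] .
  have sub: "{real j * e..(real j + 1) * e} \<subseteq> h ` {a..b}"
  proof
    fix y assume y: "y \<in> {real j * e..(real j + 1) * e}"
    then have y1: "lo \<le> y" "y \<le> hi" using j2 j3 hl e by (auto simp: algebra_simps)
    show "y \<in> h ` {a..b}"
    proof (cases "h a \<le> h b")
      case True
      then obtain x where "a \<le> x" "x \<le> b" "h x = y"
        using IVT'[of h a y b] y1 ab hc' unfolding lo_def hi_def by auto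
      then show ?thesis by auto
    next
      case False
      then obtain x where "a \<le> x" "x \<le> b" "h x = y"
        using IVT2'[of h b y a] y1 ab hc' unfolding lo_def hi_def by auto
      then show ?thesis by auto
    qed
  qed
  have "(real j + 1) * e \<le> 1" using j3 hl lo0 e by (simp add: algebra_simps)
  with sub show ?thesis by blast
qed

context ps begin

lemma unif: "\<exists>d>0. \<forall>s<k. \<forall>x\<in>{0..1}. \<forall>y\<in>{0..1}. \<bar>x - y\<bar> < d \<longrightarrow> \<bar>ncomp f 1 s x - ncomp f 1 s y\<bar> < \<delta>"
proof -
  have "\<exists>d>0. \<forall>s\<in>{..<k}. \<forall>x\<in>{0..1}. \<forall>y\<in>{0..1}. \<bar>x - y\<bar> < d \<longrightarrow> \<bar>ncomp f 1 s x - ncomp f 1 s y\<bar> < \<delta>"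
  proof (rule finite_min)
    show "\<forall>s\<in>{..<k}. \<exists>d>0. \<forall>x\<in>{0..1}. \<forall>y\<in>{0..1}. \<bar>x - y\<bar> < d \<longrightarrow> \<bar>ncomp f 1 s x - ncomp f 1 s y\<bar> < \<delta>"
    proof
      fix s
      have "uniformly_continuous_on {0..1} (ncomp f 1 s)"
        using compact_uniformly_continuous[OF g_cont[of 1 s]] by simp
      then obtain d where "d > 0" "\<forall>x\<in>{0..1}. \<forall>x'\<in>{0..1}. dist x' x < d \<longrightarrow> dist (ncomp f 1 s x') (ncomp f 1 s x) < \<delta>"
        unfolding uniformly_continuous_on_def using dpos by metis
      then show "\<exists>d>0. \<forall>x\<in>{0..1}. \<forall>y\<in>{0..1}. \<bar>x - y\<bar> < d \<longrightarrow> \<bar>ncomp f 1 s x - ncomp f 1 s y\<bar> < \<delta>"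
        by (auto simp: dist_real_def)
    qed
  qed auto
  then show ?thesis by auto
qed

lemma S: "\<exists>d1>0. \<forall>V. nopen01 V \<longrightarrow> (\<exists>q\<ge>1. \<exists>a b. a \<le> b \<and> {a..b} \<subseteq> V \<and> \<bar>ncomp f 1 (k*q) a - ncomp f 1 (k*q) b\<bar> \<ge> d1)"
proof -
  obtain d where d: "d > 0" "\<And>s x y. s < k \<Longrightarrow> x\<in>{0..1} \<Longrightarrow> y\<in>{0..1} \<Longrightarrow> \<bar>x - y\<bar> < d \<Longrightarrow> \<bar>ncomp f 1 s x - ncomp f 1 s y\<bar> < \<delta>"
    using unif by blast
  have "\<forall>V. nopen01 V \<longrightarrow> (\<exists>q\<ge>1. \<exists>a b. a \<le> b \<and> {a..b} \<subseteq> V \<and> \<bar>ncomp f 1 (k*q) a - ncomp f 1 (k*q) b\<bar> \<ge> d)"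
  proof (intro allI impI)
    fix V assume V: "nopen01 V"
    then obtain c where c: "c \<in> V" unfolding nopen01_def by auto
    have Vs: "V \<subseteq> {0..1}" and Vo: "\<forall>x\<in>V. \<exists>e>0. \<forall>x'\<in>{0..1}. dist x' x < e \<longrightarrow> x'\<in> V"
      using V unfolding nopen01_def openin_euclidean_subtopology_iff by auto
    obtain r where r: "r > 0" "\<And>x'. x' \<in> {0..1} \<Longrightarrow> dist x' c < r \<Longrightarrow> x' \<in> V"
      using Vo c by blast
    define r' where "r' = min r (d/2)"
    have r'p: "r' > 0" using r d unfolding r'_def by auto
    define V' where "V' = {0..1} \<inter> ball c r'"
    have V'V: "V' \<subseteq> V" using r unfolding V'_def r'_def by (auto simp: dist_commute)
    have "nopen01 V'" unfolding nopen01_def V'_def using c Vs r'p by auto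
    then obtain n where n: "n \<in> Nset f V' \<delta>" using sens by blast
    then obtain u v where uv: "n \<ge> 1" "u \<in> V'" "v \<in> V'" "dist (ncomp f 1 n u) (ncomp f 1 n v) > \<delta>"
      unfolding Nset_def by auto
    define q where "q = n div k"
    define s where "s = n mod k"
    have ns: "n = k * q + s" unfolding q_def s_def by simp
    have sk: "s < k" unfolding s_def using kpos by simp
    have gn: "ncomp f 1 n = ncomp f 1 s \<circ> ncomp f 1 (k*q)" using g_split ns by simp
    have uI: "u \<in> {0..1}" "v \<in> {0..1}" using uv unfolding V'_def by auto
    have big: "\<bar>ncomp f 1 (k*q) u - ncomp f 1 (k*q) v\<bar> \<ge> d"
    proof (rule ccontr)
      assume "\<not> ?thesis"
      then have "\<bar>ncomp f 1 s (ncomp f 1 (k*q) u) - ncomp f 1 s (ncomp f 1 (k*q) v)\<bar> < \<delta>"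
        using d(2)[OF sk g_maps[OF _ uI(1)] g_maps[OF _ uI(2)]] by simp
      then show False using uv(4) gn by (simp add: dist_real_def)
    qed
    have "q \<noteq> 0"
    proof
      assume "q = 0"
      then have "\<bar>u - v\<bar> \<ge> d" using big by simp
      moreover have "\<bar>u - v\<bar> < d" using uv(2,3) unfolding V'_def r'_def
        by (auto simp: dist_real_def abs_if split: if_splits)
      ultimately show False by simp
    qed
    have seg: "{min u v..max u v} \<subseteq> V'"
    proof
      fix x assume x: "x \<in> {min u v..max u v}"
      then have "dist c x < r'" using uv(2,3) unfolding V'_def by (auto simp: dist_real_def)
      moreover have "x \<in> {0..1}" using x uI by auto
      ultimately show "x \<in> V'" unfolding V'_def by auto
    qed
    show "\<exists>q\<ge>1. \<exists>a b. a \<le> b \<and> {a..b} \<subseteq> V \<and> \<bar>ncomp f 1 (k*q) a - ncomp f 1 (k*q) b\<bar> \<ge> d"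
    proof (intro exI conjI)
      show "1 \<le> q" using \<open>q \<noteq> 0\<close> by simp
      show "min u v \<le> max u v" by simp
      show "{min u v..max u v} \<subseteq> V" using seg V'V by auto
      show "\<bar>ncomp f 1 (k*q) (min u v) - ncomp f 1 (k*q) (max u v)\<bar> \<ge> d"
        using big by (cases "u \<le> v") (auto simp: min_def max_def abs_minus_commute)
    qed
  qed
  then show ?thesis using d(1) by blast
qed

end

context ps begin

lemma nondeg:
  assumes e: "e > 0" and j: "(real j + 1) * e \<le> 1"
  shows "\<exists>x\<in>{real j * e..(real j + 1) * e}. \<exists>y\<in>{real j * e..(real j + 1) * e}. ncomp f 1 m x \<noteq> ncomp f 1 m y"
proof (rule ccontr)
  assume "\<not> ?thesis"
  then have const: "\<And>x y. x \<in> {real j * e..(real j + 1) * e} \<Longrightarrow> y \<in> {real j * e..(real j + 1) * e} \<Longrightarrow> ncomp f 1 m x = ncomp f 1 m y"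
    by blast
  define c where "c = (real j + 1/2) * e"
  have cI: "c \<in> {0..1}" using e j unfolding c_def by (auto simp: algebra_simps)
  have "\<exists>r>0. \<forall>t\<in>{..<m}. \<forall>x\<in>{0..1}. dist x c < r \<longrightarrow> dist (ncomp f 1 t x) (ncomp f 1 t c) < \<delta>/2"
  proof (rule finite_min)
    show "\<forall>t\<in>{..<m}. \<exists>r>0. \<forall>x\<in>{0..1}. dist x c < r \<longrightarrow> dist (ncomp f 1 t x) (ncomp f 1 t c) < \<delta>/2"
    proof
      fix t
      show "\<exists>r>0. \<forall>x\<in>{0..1}. dist x c < r \<longrightarrow> dist (ncomp f 1 t x) (ncomp f 1 t c) < \<delta>/2"
      proof -
        have "\<forall>x\<in>{0..1}. \<forall>\<epsilon>>0. \<exists>d>0. \<forall>x'\<in>{0..1}. dist x' x < d \<longrightarrow> dist (ncomp f 1 t x') (ncomp f 1 t x) < \<epsilon>"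
          using g_cont[of 1 t] unfolding continuous_on_iff by simp
        then have "\<exists>d>0. \<forall>x'\<in>{0..1}. dist x' c < d \<longrightarrow> dist (ncomp f 1 t x') (ncomp f 1 t c) < \<delta>/2"
          using cI dpos by (meson half_gt_zero)
        then show ?thesis by blast
      qed
    qed
  qed auto
  then obtain r where r: "r > 0" "\<And>t x. t < m \<Longrightarrow> x\<in>{0..1} \<Longrightarrow> dist x c < r \<Longrightarrow> dist (ncomp f 1 t x) (ncomp f 1 t c) < \<delta>/2"
    by blast
  define r' where "r' = min r (e/2)"
  have r'p: "r' > 0" using r e unfolding r'_def by auto
  have ballsub: "ball c r' \<subseteq> {real j * e..(real j + 1) * e}"
    unfolding r'_def c_def by (auto simp: dist_real_def algebra_simps abs_if split: if_splits)
  have ball01: "ball c r' \<subseteq> {0..1}"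
  proof -
    have "{real j * e..(real j + 1) * e} \<subseteq> {0..1}" using j e by auto
    then show ?thesis using ballsub by blast
  qed
  have "nopen01 (ball c r')"
    unfolding nopen01_def using r'p ball01 openin_open_Int[of "ball c r'" "{0..1}"]
    by (auto simp: Int_absorb1)
  then obtain n where "n \<in> Nset f (ball c r') \<delta>" using sens by blast
  then obtain u v where uv: "n \<ge> 1" "u \<in> ball c r'" "v \<in> ball c r'" "dist (ncomp f 1 n u) (ncomp f 1 n v) > \<delta>"
    unfolding Nset_def by auto
  show False
  proof (cases "n < m")
    case True
    have uI: "u \<in> {0..1}" "v \<in> {0..1}" using uv ball01 by auto
    have "dist u c < r" "dist v c < r" using uv unfolding r'_def by (auto simp: dist_commute)
    then have "dist (ncomp f 1 n u) (ncomp f 1 n c) < \<delta>/2" "dist (ncomp f 1 n v) (ncomp f 1 n c) < \<delta>/2"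
      using r(2)[OF True] uI by auto
    then have "dist (ncomp f 1 n u) (ncomp f 1 n v) < \<delta>"
      using dist_triangle_half_l by blast
    then show False using uv by simp
  next
    case False
    then have nn: "n = m + (n - m)" by simp
    have "ncomp f 1 n = ncomp f (1 + m) (n - m) \<circ> ncomp f 1 m"
      using ncomp_add[of f 1 m "n-m"] nn by metis
    moreover have "ncomp f 1 m u = ncomp f 1 m v" using const ballsub uv by blast
    ultimately have "ncomp f 1 n u = ncomp f 1 n v" by simp
    then show False using uv dpos by simp
  qed
qed

end

context ps begin

lemma cofinite: "\<exists>\<eta>>0. \<forall>U. nopen01 U \<longrightarrow> (\<exists>N. \<forall>n\<ge>N. \<exists>u\<in>U. \<exists>v\<in>U. dist (ncomp f 1 n u) (ncomp f 1 n v) > \<eta>)"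
proof -
  obtain d1 where d1: "d1 > 0" "\<And>V. nopen01 V \<Longrightarrow> \<exists>q\<ge>1. \<exists>a b. a \<le> b \<and> {a..b} \<subseteq> V \<and> \<bar>ncomp f 1 (k*q) a - ncomp f 1 (k*q) b\<bar> \<ge> d1"
    using S by blast
  define e where "e = d1 / 4"
  define G where "G j = {real j * e..(real j + 1) * e}" for j :: nat
  define J where "J = {j::nat. (real j + 1) * e \<le> 1}"
  have e0: "e > 0" using d1 unfolding e_def by simp
  have finJ: "finite J"
  proof (rule finite_subset)
    show "J \<subseteq> {..nat \<lceil>1/e\<rceil>}"
    proof
      fix j assume "j \<in> J"
      then have "real j * e \<le> 1" using e0 unfolding J_def by (simp add: algebra_simps)
      then have "real j \<le> 1 / e" using e0 by (simp add: field_simps)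
      then show "j \<in> {..nat \<lceil>1/e\<rceil>}" by (simp add: le_nat_iff) linarith
    qed
  qed simp
  have G01: "G j \<subseteq> {0..1}" if "j \<in> J" for j
    using that e0 unfolding G_def J_def by auto
  have hit: "\<exists>i\<in>J. G i \<subseteq> ncomp f 1 (k*q) ` {a..b}"
    if "a \<le> b" "{a..b} \<subseteq> {0..1}" "\<bar>ncomp f 1 (k*q) a - ncomp f 1 (k*q) b\<bar> \<ge> d1" for a b q
  proof -
    have "\<exists>j::nat. (real j + 1) * e \<le> 1 \<and> {real j * e..(real j + 1) * e} \<subseteq> ncomp f 1 (k*q) ` {a..b}"
      by (rule grid[OF e0 that(1,2)]) (use that(3) g_cont g_maps in \<open>auto simp: e_def\<close>)
    then show ?thesis unfolding J_def G_def by auto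
  qed
  have stepA: "\<forall>j\<in>J. \<exists>q. q \<ge> 1 \<and> (\<exists>i\<in>J. G i \<subseteq> ncomp f 1 (k*q) ` G j)"
  proof
    fix j assume j: "j \<in> J"
    define V where "V = {real j * e<..<(real j + 1) * e}"
    have VG: "V \<subseteq> G j" unfolding V_def G_def by auto
    have "(real j + 1/2) * e \<in> V" unfolding V_def using e0 by (auto simp: algebra_simps)
    moreover have "openin (top_of_set {0..1}) V"
    proof -
      have "openin (top_of_set {0..1}) ({0..1} \<inter> V)" unfolding V_def by (rule openin_open_Int) simp
      moreover have "{0..1} \<inter> V = V" using VG G01[OF j] by auto
      ultimately show ?thesis by simp
    qed
    ultimately have "nopen01 V" unfolding nopen01_def by auto
    then obtain q a b where q: "q \<ge> 1" "a \<le> b" "{a..b} \<subseteq> V" "\<bar>ncomp f 1 (k*q) a - ncomp f 1 (k*q) b\<bar> \<ge> d1"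
      using d1(2) by blast
    have "{a..b} \<subseteq> {0..1}" using q(3) VG G01[OF j] by (meson order_trans)
    then obtain i where "i \<in> J" "G i \<subseteq> ncomp f 1 (k*q) ` {a..b}" using hit q by blast
    moreover have "ncomp f 1 (k*q) ` {a..b} \<subseteq> ncomp f 1 (k*q) ` G j" using q(3) VG by auto
    ultimately show "\<exists>q. q \<ge> 1 \<and> (\<exists>i\<in>J. G i \<subseteq> ncomp f 1 (k*q) ` G j)" using q(1) by blast
  qed
  obtain M where M: "\<forall>j\<in>J. \<exists>q\<le>M. q \<ge> 1 \<and> (\<exists>i\<in>J. G i \<subseteq> ncomp f 1 (k*q) ` G j)"
    using finite_bound[OF finJ stepA] by blast
  have "\<exists>\<eta>>0. \<forall>p\<in>J \<times> {..<M*k}. \<exists>x\<in>G (fst p). \<exists>y\<in>G (fst p). \<bar>ncomp f 1 (snd p) x - ncomp f 1 (snd p) y\<bar> > \<eta>"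
  proof (rule finite_min)
    show "finite (J \<times> {..<M*k})" using finJ by simp
    show "\<forall>p\<in>J \<times> {..<M*k}. \<exists>\<eta>>0. \<exists>x\<in>G (fst p). \<exists>y\<in>G (fst p). \<bar>ncomp f 1 (snd p) x - ncomp f 1 (snd p) y\<bar> > \<eta>"
    proof
      fix p assume "p \<in> J \<times> {..<M*k}"
      then have "fst p \<in> J" by auto
      then obtain x y where xy: "x \<in> G (fst p)" "y \<in> G (fst p)" "ncomp f 1 (snd p) x \<noteq> ncomp f 1 (snd p) y"
        using nondeg[OF e0, of "fst p" "snd p"] unfolding J_def G_def by auto
      show "\<exists>\<eta>>0. \<exists>x\<in>G (fst p). \<exists>y\<in>G (fst p). \<bar>ncomp f 1 (snd p) x - ncomp f 1 (snd p) y\<bar> > \<eta>"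
      proof -
        have "\<bar>ncomp f 1 (snd p) x - ncomp f 1 (snd p) y\<bar> > 0" using xy(3) by simp
        then have "\<bar>ncomp f 1 (snd p) x - ncomp f 1 (snd p) y\<bar> / 2 > 0"
          "\<bar>ncomp f 1 (snd p) x - ncomp f 1 (snd p) y\<bar> > \<bar>ncomp f 1 (snd p) x - ncomp f 1 (snd p) y\<bar> / 2" by auto
        then show ?thesis using xy(1,2) by blast
      qed
    qed
  qed force
  then obtain \<eta> where eta: "\<eta> > 0"
    "\<And>j m. j \<in> J \<Longrightarrow> m < M*k \<Longrightarrow> \<exists>x\<in>G j. \<exists>y\<in>G j. \<bar>ncomp f 1 m x - ncomp f 1 m y\<bar> > \<eta>"
    by force
  have "\<forall>U. nopen01 U \<longrightarrow> (\<exists>N. \<forall>n\<ge>N. \<exists>u\<in>U. \<exists>v\<in>U. dist (ncomp f 1 n u) (ncomp f 1 n v) > \<eta>)"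
  proof (intro allI impI)
    fix U assume U: "nopen01 U"
    have U01: "U \<subseteq> {0..1}" using U unfolding nopen01_def openin_euclidean_subtopology_iff by blast
    obtain q0 a b where q0: "q0 \<ge> 1" "a \<le> b" "{a..b} \<subseteq> U" "\<bar>ncomp f 1 (k*q0) a - ncomp f 1 (k*q0) b\<bar> \<ge> d1"
      using d1(2)[OF U] by blast
    obtain j0 where j0: "j0 \<in> J" "G j0 \<subseteq> ncomp f 1 (k*q0) ` {a..b}" using hit q0 U01 by blast
    define Reach where "Reach t \<longleftrightarrow> (\<exists>c j. t = k*c \<and> j \<in> J \<and> G j \<subseteq> ncomp f 1 t ` U)" for t
    have R0: "Reach (k*q0)" unfolding Reach_def using j0 q0(3) by blast
    have M1: "M \<ge> 1" using M j0(1) by force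
    have step: "\<exists>t'. Reach t' \<and> t < t' \<and> t' \<le> t + M*k" if Rt: "Reach t" for t
    proof -
      obtain c j where cj: "t = k*c" "j \<in> J" "G j \<subseteq> ncomp f 1 t ` U" using Rt unfolding Reach_def by blast
      obtain q i where qi: "q \<le> M" "q \<ge> 1" "i \<in> J" "G i \<subseteq> ncomp f 1 (k*q) ` G j" using M cj(2) by blast
      have gs: "ncomp f 1 (k*(c+q)) = ncomp f 1 (k*q) \<circ> ncomp f 1 (k*c)"
        using g_split[of c "k*q"] by (simp add: algebra_simps)
      have "G i \<subseteq> ncomp f 1 (k*(c+q)) ` U"
        using qi(4) cj(3) unfolding gs cj(1) image_comp[symmetric] by (meson image_mono order_trans)
      then have "Reach (k*(c+q))" unfolding Reach_def using qi(3) by blast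
      moreover have "t < k*(c+q)" using cj(1) qi(2) kpos by simp
      moreover have "k*(c+q) \<le> t + M*k" using cj(1) qi(1) by (simp add: algebra_simps)
      ultimately show ?thesis by blast
    qed
    have main: "\<exists>t. Reach t \<and> t \<le> k*q0 + d \<and> k*q0 + d < t + M*k" for d
    proof (induction d)
      case 0 then show ?case using R0 M1 kpos by (intro exI[of _ "k*q0"]) auto
    next
      case (Suc d)
      then obtain t where t: "Reach t" "t \<le> k*q0 + d" "k*q0 + d < t + M*k" by blast
      show ?case
      proof (cases "k*q0 + Suc d < t + M*k")
        case True then show ?thesis using t by (intro exI[of _ t]) auto
      next
        case False
        then obtain t' where "Reach t'" "t < t'" "t' \<le> t + M*k" using step t(1) by blast
        then show ?thesis using False t by (intro exI[of _ t']) auto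
      qed
    qed
    show "\<exists>N. \<forall>n\<ge>N. \<exists>u\<in>U. \<exists>v\<in>U. dist (ncomp f 1 n u) (ncomp f 1 n v) > \<eta>"
    proof (intro exI allI impI)
      fix n assume n: "k*q0 \<le> n"
      then obtain t where t: "Reach t" "t \<le> n" "n < t + M*k" using main[of "n - k*q0"] by auto
      then obtain c j where cj: "t = k*c" "j \<in> J" "G j \<subseteq> ncomp f 1 t ` U" unfolding Reach_def by blast
      have "n - t < M*k" using t by simp
      then obtain x y where xy: "x \<in> G j" "y \<in> G j" "\<bar>ncomp f 1 (n-t) x - ncomp f 1 (n-t) y\<bar> > \<eta>"
        using eta(2)[OF cj(2)] by blast
      obtain x' y' where x'y': "x' \<in> U" "y' \<in> U" "x = ncomp f 1 t x'" "y = ncomp f 1 t y'"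
        using xy(1,2) cj(3) by blast
      have gn: "ncomp f 1 n = ncomp f 1 (n-t) \<circ> ncomp f 1 t"
        using g_split[of c "n-t"] t(2) cj(1) by simp
      show "\<exists>u\<in>U. \<exists>v\<in>U. dist (ncomp f 1 n u) (ncomp f 1 n v) > \<eta>"
        using x'y' xy(3) gn by (intro bexI[of _ x'] bexI[of _ y']) (auto simp: dist_real_def)
    qed
  qed
  then show ?thesis using eta(1) by blast
qed

end

lemma INT1: "(\<Inter>i<(1::nat). A i) = A 0"
  by (auto simp: lessThan_Suc)

theorem mainTheorem2:
  fixes f :: "nat \<Rightarrow> real \<Rightarrow> real"
  assumes cont: "\<And>n. n \<ge> 1 \<Longrightarrow> continuous_on {0..1} (f n)"
      and maps: "\<And>n. n \<ge> 1 \<Longrightarrow> f n ` {0..1} \<subseteq> {0..1}"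
      and periodic: "\<exists>k\<ge>1. \<forall>l j. 1 \<le> j \<and> j \<le> k \<longrightarrow> f (j + k * l) = f j"
  shows "(strongly_multi_sensitive f \<longleftrightarrow> N_sensitive f)
       \<and> (N_sensitive f \<longleftrightarrow> multi_sensitive f)
       \<and> (multi_sensitive f \<longleftrightarrow> sensitive f)"
proof -
  obtain k where k: "k \<ge> 1" "\<forall>l j. 1 \<le> j \<and> j \<le> k \<longrightarrow> f (j + k * l) = f j" using periodic by blast
  have N1: "Nset (block f 1) U d = Nset f U d" for U d
    unfolding Nset_def ncomp_block by simp
  have wrt1: "sensitive f" if W: "multi_sensitive_wrt f 1 v" "v 0 = 1" for v
  proof -
    have "\<exists>d>0. \<forall>U::nat \<Rightarrow> real set. (\<forall>i<1. nopen01 (U i)) \<longrightarrow>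
      (\<Inter>i<1. Nset (block f (v i)) (U i) d) \<noteq> {}"
      using W(1) unfolding multi_sensitive_wrt_def .
    then obtain d where d0: "d > 0" and d: "\<forall>U::nat \<Rightarrow> real set. (\<forall>i<1. nopen01 (U i)) \<longrightarrow>
      (\<Inter>i<1. Nset (block f (v i)) (U i) d) \<noteq> {}" by (elim exE conjE)
    have "Nset f V d \<noteq> {}" if V: "nopen01 V" for V
    proof -
      have "\<forall>i<1. nopen01 ((\<lambda>_::nat. V) i)" using V by simp
      then have "(\<Inter>i<1. Nset (block f (v i)) ((\<lambda>_::nat. V) i) d) \<noteq> {}" by (rule mp[OF spec[OF d, of "\<lambda>_::nat. V"]])
      then show ?thesis unfolding INT1 W(2) N1 by simp
    qed
    then show ?thesis unfolding sensitive_def using d0 by blast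
  qed
  have ms1: "sensitive f" if W: "multi_sensitive f"
  proof -
    have "\<exists>d>0. \<forall>(m::nat) (V::nat \<Rightarrow> real set). m \<ge> 1 \<longrightarrow> (\<forall>i<m. nopen01 (V i)) \<longrightarrow>
      (\<Inter>i<m. Nset f (V i) d) \<noteq> {}"
      using W unfolding multi_sensitive_def .
    then obtain d where d0: "d > 0" and d: "\<forall>(m::nat) (V::nat \<Rightarrow> real set). m \<ge> 1 \<longrightarrow> (\<forall>i<m. nopen01 (V i)) \<longrightarrow>
      (\<Inter>i<m. Nset f (V i) d) \<noteq> {}" by (elim exE conjE)
    have "Nset f V d \<noteq> {}" if V: "nopen01 V" for V
    proof -
      have "\<forall>i<1. nopen01 ((\<lambda>_::nat. V) i)" using V by simp
      moreover have "(1::nat) \<ge> 1 \<longrightarrow> (\<forall>i<1. nopen01 ((\<lambda>_::nat. V) i)) \<longrightarrow> (\<Inter>i<1. Nset f ((\<lambda>_::nat. V) i) d) \<noteq> {}"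
        by (fact spec[OF spec[OF d, of 1], of "\<lambda>_::nat. V"])
      ultimately have "(\<Inter>i<1. Nset f ((\<lambda>_::nat. V) i) d) \<noteq> {}" by blast
      then show ?thesis unfolding INT1 by simp
    qed
    then show ?thesis unfolding sensitive_def using d0 by blast
  qed
  have key: "\<exists>\<eta>>0. \<forall>(r::nat) (U::nat \<Rightarrow> real set) (c::nat \<Rightarrow> nat). (\<forall>i<r. nopen01 (U i)) \<longrightarrow> (\<forall>i<r. c i \<ge> 1) \<longrightarrow>
      (\<Inter>i<r. Nset (block f (c i)) (U i) \<eta>) \<noteq> {}" if W: "sensitive f"
  proof -
    have "\<exists>d>0. \<forall>V. nopen01 V \<longrightarrow> Nset f V d \<noteq> {}" using W unfolding sensitive_def .
    then obtain d where d: "d > 0" "\<forall>V. nopen01 V \<longrightarrow> Nset f V d \<noteq> {}" by (elim exE conjE)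
    have "ps f k d" unfolding ps_def
      apply (intro conjI)
      using cont maps k d apply simp_all
      done
    then interpret ps f k d .
    obtain \<eta> where eta: "\<eta> > 0" "\<And>U. nopen01 U \<Longrightarrow> \<exists>N. \<forall>n\<ge>N. \<exists>u\<in>U. \<exists>v\<in>U. dist (ncomp f 1 n u) (ncomp f 1 n v) > \<eta>"
      using cofinite by metis
    have "\<forall>(r::nat) (U::nat \<Rightarrow> real set) (c::nat \<Rightarrow> nat). (\<forall>i<r. nopen01 (U i)) \<longrightarrow> (\<forall>i<r. c i \<ge> 1) \<longrightarrow>
      (\<Inter>i<r. Nset (block f (c i)) (U i) \<eta>) \<noteq> {}"
    proof (intro allI impI)
      fix r :: nat and U :: "nat \<Rightarrow> real set" and c :: "nat \<Rightarrow> nat" assume U: "\<forall>i<r. nopen01 (U i)" and c: "\<forall>i<r. (c i::nat) \<ge> 1"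
      have "\<forall>i\<in>{..<r}. \<exists>N. \<forall>n\<ge>N. \<exists>u\<in>U i. \<exists>v\<in>U i. dist (ncomp f 1 n u) (ncomp f 1 n v) > \<eta>"
      proof
        fix i assume "i \<in> {..<r}"
        then have "nopen01 (U i)" using U by simp
        then show "\<exists>N. \<forall>n\<ge>N. \<exists>u\<in>U i. \<exists>v\<in>U i. dist (ncomp f 1 n u) (ncomp f 1 n v) > \<eta>" by (rule eta(2))
      qed
      from finite_bound[OF finite_lessThan[of r] this] obtain M where
        M: "\<forall>i\<in>{..<r}. \<exists>N\<le>M. \<forall>n\<ge>N. \<exists>u\<in>U i. \<exists>v\<in>U i. dist (ncomp f 1 n u) (ncomp f 1 n v) > \<eta>"
        by (elim exE)
      have "M + 1 \<in> (\<Inter>i<r. Nset (block f (c i)) (U i) \<eta>)"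
      proof (rule INT_I)
        fix i assume i: "i \<in> {..<r}"
        then obtain N where N: "N \<le> M" "\<forall>n\<ge>N. \<exists>u\<in>U i. \<exists>v\<in>U i. dist (ncomp f 1 n u) (ncomp f 1 n v) > \<eta>"
          using M by blast
        have "c i \<ge> 1" using c i by simp
        then have "1 * (M + 1) \<le> c i * (M + 1)" by (rule mult_le_mono1)
        then have "M + 1 \<le> c i * (M + 1)" by simp
        then have "c i * (M + 1) \<ge> N" using N(1) by linarith
        then show "M + 1 \<in> Nset (block f (c i)) (U i) \<eta>"
          using N(2) unfolding Nset_def ncomp_block by simp
      qed
      then show "(\<Inter>i<r. Nset (block f (c i)) (U i) \<eta>) \<noteq> {}" by blast
    qed
    then show ?thesis using eta(1) by blast
  qed
  have s2sm: "strongly_multi_sensitive f" if W: "sensitive f"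
  proof -
    obtain \<eta> where eta: "\<eta> > 0" "\<And>(r::nat) (U::nat \<Rightarrow> real set) (c::nat \<Rightarrow> nat). (\<forall>i<r. nopen01 (U i)) \<Longrightarrow> (\<forall>i<r. c i \<ge> 1) \<Longrightarrow>
      (\<Inter>i<r. Nset (block f (c i)) (U i) \<eta>) \<noteq> {}" using key[OF W] by blast
    show ?thesis unfolding strongly_multi_sensitive_def multi_sensitive_wrt_def
    proof (intro allI impI)
      fix r :: nat and v :: "nat \<Rightarrow> nat" assume v: "\<forall>i<r. 1 \<le> v i"
      show "\<exists>\<delta>>0. \<forall>U::nat \<Rightarrow> real set. (\<forall>i<r. nopen01 (U i)) \<longrightarrow> (\<Inter>i<r. Nset (block f (v i)) (U i) \<delta>) \<noteq> {}"
      proof (intro exI[of _ \<eta>] conjI allI impI)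
        fix U :: "nat \<Rightarrow> real set" assume "\<forall>i<r. nopen01 (U i)"
        then show "(\<Inter>i<r. Nset (block f (v i)) (U i) \<eta>) \<noteq> {}" using v by (rule eta(2))
      qed (rule eta(1))
    qed
  qed
  have s2N: "N_sensitive f" if W: "sensitive f"
  proof -
    obtain \<eta> where eta: "\<eta> > 0" "\<And>(r::nat) (U::nat \<Rightarrow> real set) (c::nat \<Rightarrow> nat). (\<forall>i<r. nopen01 (U i)) \<Longrightarrow> (\<forall>i<r. c i \<ge> 1) \<Longrightarrow>
      (\<Inter>i<r. Nset (block f (c i)) (U i) \<eta>) \<noteq> {}" using key[OF W] by blast
    show ?thesis unfolding N_sensitive_def multi_sensitive_wrt_def
    proof (intro allI impI)
      fix r :: nat
      have "\<forall>i<r. (1::nat) \<le> i + 1" by simp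
      show "\<exists>\<delta>>0. \<forall>U::nat \<Rightarrow> real set. (\<forall>i<r. nopen01 (U i)) \<longrightarrow> (\<Inter>i<r. Nset (block f (i + 1)) (U i) \<delta>) \<noteq> {}"
      proof (intro exI[of _ \<eta>] conjI allI impI)
        fix U :: "nat \<Rightarrow> real set" assume U: "\<forall>i<r. nopen01 (U i)"
        show "(\<Inter>i<r. Nset (block f (i + 1)) (U i) \<eta>) \<noteq> {}" using eta(2)[of r U "\<lambda>i. i + 1", OF U] by simp
      qed (rule eta(1))
    qed
  qed
  have s2m: "multi_sensitive f" if W: "sensitive f"
  proof -
    obtain \<eta> where eta: "\<eta> > 0" "\<And>(r::nat) (U::nat \<Rightarrow> real set) (c::nat \<Rightarrow> nat). (\<forall>i<r. nopen01 (U i)) \<Longrightarrow> (\<forall>i<r. c i \<ge> 1) \<Longrightarrow>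
      (\<Inter>i<r. Nset (block f (c i)) (U i) \<eta>) \<noteq> {}" using key[OF W] by blast
    have "(\<Inter>i<m. Nset f (V i) \<eta>) \<noteq> {}" if V: "\<forall>i<m. nopen01 (V i)" for m :: nat and V :: "nat \<Rightarrow> real set"
      using eta(2)[of m V "\<lambda>_. 1", OF V] unfolding N1 by simp
    then show ?thesis unfolding multi_sensitive_def using eta(1) by blast
  qed
  have sm2s: "sensitive f" if W: "strongly_multi_sensitive f"
  proof -
    have "\<forall>r\<ge>1. \<forall>v. (\<forall>i<r. v i \<ge> 1) \<longrightarrow> multi_sensitive_wrt f r v"
      using W unfolding strongly_multi_sensitive_def .
    then have "multi_sensitive_wrt f 1 (\<lambda>_. 1)" by simp
    then show ?thesis by (rule wrt1) simp
  qed
  have N2s: "sensitive f" if W: "N_sensitive f"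
  proof -
    have "\<forall>n\<ge>1. multi_sensitive_wrt f n (\<lambda>i. i + 1)"
      using W unfolding N_sensitive_def .
    then have "multi_sensitive_wrt f 1 (\<lambda>i. i + 1)" by simp
    then show ?thesis by (rule wrt1) simp
  qed
  show ?thesis using s2sm s2N s2m sm2s N2s ms1 by blast
qed

end
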